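(* Let $X$ and $Y$ be Banach spaces with $Y$ prime. If $S\in B(Y)$ is compact and equivalent after extension to some $T\in B(X)$, then $X$ contains a closed subspace topologically isomorphic to $Y$.
   Context: All Banach spaces are complex; $B(X,Y)$ denotes bounded linear operators; invertibility means bounded inverse; $X\oplus Y$ is the $\ell^2$-direct sum and $\mathrm{id}_X$ the identity. Operators $T\in B(X)$ and $S\in B(Y)$ are equivalent after extension if there exist Banach spaces $X'$, $Y'$ and invertible $E\in B(Y\oplus Y',X\oplus X')$, $F\in B(X\oplus X',Y\oplus Y')$ with $\begin{bmatrix}T&0\\0&\mathrm{id}_{X'}\end{bmatrix}=E\begin{bmatrix}S&0\\0&\mathrm{id}_{Y'}\end{bmatrix}F$. A Banach space is prime if every infinite dimensional complemented subspace of it is topologically isomorphic to the whole space. *)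

theory Defs
  imports "HOL-Analysis.Analysis"
begin

class cscale =
  fixes cscale :: "complex \<Rightarrow> 'a \<Rightarrow> 'a" (infixr "*\<^sub>C" 75)

class complex_banach = banach + cscale +
  assumes cscale_add_right: "a *\<^sub>C (x + y) = a *\<^sub>C x + a *\<^sub>C y"
    and cscale_add_left: "(a + b) *\<^sub>C x = a *\<^sub>C x + b *\<^sub>C x"
    and cscale_cscale: "a *\<^sub>C (b *\<^sub>C x) = (a * b) *\<^sub>C x"
    and cscale_of_real: "complex_of_real r *\<^sub>C x = r *\<^sub>R x"
    and norm_cscale: "norm (a *\<^sub>C x) = cmod a * norm x"

text \<open>The l2-direct sum: the product type carries the norm sqrt(norm x ^ 2 + norm y ^ 2).\<close>

instantiation prod :: (complex_banach, complex_banach) complex_banach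
begin

definition cscale_prod :: "complex \<Rightarrow> 'a \<times> 'b \<Rightarrow> 'a \<times> 'b" where
  "cscale_prod c p = (c *\<^sub>C fst p, c *\<^sub>C snd p)"

instance
proof
  fix a b :: complex and x y :: "'a \<times> 'b" and r :: real
  show "a *\<^sub>C (x + y) = a *\<^sub>C x + a *\<^sub>C y"
    by (simp add: cscale_prod_def cscale_add_right)
  show "(a + b) *\<^sub>C x = a *\<^sub>C x + b *\<^sub>C x"
    by (simp add: cscale_prod_def cscale_add_left)
  show "a *\<^sub>C (b *\<^sub>C x) = (a * b) *\<^sub>C x"
    by (simp add: cscale_prod_def cscale_cscale)
  show "complex_of_real r *\<^sub>C x = r *\<^sub>R x"
    by (simp add: cscale_prod_def cscale_of_real prod_eq_iff)
  have "norm (a *\<^sub>C x) = sqrt ((cmod a)\<^sup>2 * ((norm (fst x))\<^sup>2 + (norm (snd x))\<^sup>2))"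
    by (simp add: cscale_prod_def norm_Pair norm_cscale power_mult_distrib algebra_simps)
  also have "\<dots> = cmod a * norm x"
    by (simp add: real_sqrt_mult norm_prod_def)
  finally show "norm (a *\<^sub>C x) = cmod a * norm x" .
qed

end

definition bounded_clinear :: "('a::complex_banach \<Rightarrow> 'b::complex_banach) \<Rightarrow> bool" where
  "bounded_clinear f \<longleftrightarrow> bounded_linear f \<and> (\<forall>c x. f (c *\<^sub>C x) = c *\<^sub>C f x)"

definition invertible_op :: "('a::complex_banach \<Rightarrow> 'b::complex_banach) \<Rightarrow> bool" where
  "invertible_op f \<longleftrightarrow> bounded_clinear f \<and>
     (\<exists>g. bounded_clinear g \<and> g \<circ> f = id \<and> f \<circ> g = id)"

definition compact_op :: "('a::complex_banach \<Rightarrow> 'b::complex_banach) \<Rightarrow> bool" where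
  "compact_op f \<longleftrightarrow> bounded_clinear f \<and> compact (closure (f ` cball 0 1))"

text \<open>Equivalence after extension, with the auxiliary spaces X', Y' and operators E, F
  given explicitly (the spaces being types).\<close>
definition equiv_after_ext_via ::
  "('x::complex_banach \<Rightarrow> 'x) \<Rightarrow> ('y::complex_banach \<Rightarrow> 'y)
   \<Rightarrow> ('y \<times> 'y2::complex_banach \<Rightarrow> 'x \<times> 'x2::complex_banach)
   \<Rightarrow> ('x \<times> 'x2 \<Rightarrow> 'y \<times> 'y2) \<Rightarrow> bool" where
  "equiv_after_ext_via T S E F \<longleftrightarrow> invertible_op E \<and> invertible_op F \<and>
     (\<lambda>(x, x'). (T x, x')) = E \<circ> (\<lambda>(y, y'). (S y, y')) \<circ> F"

definition csubspace :: "'a::complex_banach set \<Rightarrow> bool" where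
  "csubspace M \<longleftrightarrow> 0 \<in> M \<and> (\<forall>x\<in>M. \<forall>y\<in>M. x + y \<in> M) \<and> (\<forall>c. \<forall>x\<in>M. c *\<^sub>C x \<in> M)"

definition cspan :: "'a::complex_banach set \<Rightarrow> 'a set" where
  "cspan B = \<Inter>{M. csubspace M \<and> B \<subseteq> M}"

definition infinite_dim :: "'a::complex_banach set \<Rightarrow> bool" where
  "infinite_dim M \<longleftrightarrow> \<not> (\<exists>B. finite B \<and> M \<subseteq> cspan B)"

definition complemented :: "'a::complex_banach set \<Rightarrow> bool" where
  "complemented M \<longleftrightarrow> csubspace M \<and> closed M \<and>
     (\<exists>N. csubspace N \<and> closed N \<and> M \<inter> N = {0} \<and> {m + n |m n. m \<in> M \<and> n \<in> N} = UNIV)"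

definition top_iso_onto :: "('a::complex_banach \<Rightarrow> 'b::complex_banach) \<Rightarrow> 'b set \<Rightarrow> bool" where
  "top_iso_onto f M \<longleftrightarrow> bounded_clinear f \<and> bij_betw f UNIV M \<and> continuous_on M (inv_into UNIV f)"

text \<open>Prime Banach space (infinite dimensional, as is standard).\<close>
definition prime_space :: "'a::complex_banach itself \<Rightarrow> bool" where
  "prime_space _ \<longleftrightarrow> infinite_dim (UNIV :: 'a set) \<and>
     (\<forall>M :: 'a set. complemented M \<and> infinite_dim M \<longrightarrow> (\<exists>f :: 'a \<Rightarrow> 'a. top_iso_onto f M))"

end

theory Submission
  imports Defs
begin

lemma cscale_zero_left[simp]: "(0::complex) *\<^sub>C (x::'a::complex_banach) = 0"
  using cscale_of_real[of 0 x] by simp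

lemma cscale_one[simp]: "(1::complex) *\<^sub>C (x::'a::complex_banach) = x"
  using cscale_of_real[of 1 x] by simp

lemma cscale_minus_one: "(-1::complex) *\<^sub>C (x::'a::complex_banach) = - x"
  using cscale_of_real[of "-1" x] by simp

lemma cscale_zero_right[simp]: "c *\<^sub>C (0::'a::complex_banach) = 0"
  using cscale_add_right[of c "0::'a" 0] by simp

lemma cscale_minus_right: "c *\<^sub>C (- x) = - (c *\<^sub>C (x::'a::complex_banach))"
  using cscale_add_right[of c x "-x"] by (simp add: add_eq_0_iff2 add.commute)

lemma cscale_diff_right: "c *\<^sub>C (x - y) = c *\<^sub>C x - c *\<^sub>C (y::'a::complex_banach)"
  using cscale_add_right[of c x "-y"] by (simp add: cscale_minus_right)

lemma cscale_real: "r *\<^sub>R x = complex_of_real r *\<^sub>C (x::'a::complex_banach)"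
  by (simp add: cscale_of_real)

lemma bcl_linear: "bounded_clinear f \<Longrightarrow> bounded_linear f"
  by (simp add: bounded_clinear_def)

lemma bcl_scale: "bounded_clinear f \<Longrightarrow> f (c *\<^sub>C x) = c *\<^sub>C f x"
  by (simp add: bounded_clinear_def)

lemma bcl_id: "bounded_clinear (\<lambda>x. x)"
  by (simp add: bounded_clinear_def bounded_linear_ident)

lemma bcl_comp: "bounded_clinear f \<Longrightarrow> bounded_clinear g \<Longrightarrow> bounded_clinear (\<lambda>x. f (g x))"
  unfolding bounded_clinear_def
  using bounded_linear_compose by (auto)

lemma bcl_diff: "bounded_clinear f \<Longrightarrow> bounded_clinear g \<Longrightarrow> bounded_clinear (\<lambda>x. f x - g x)"
  unfolding bounded_clinear_def
  using bounded_linear_sub by (auto simp: cscale_diff_right)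

lemma bcl_fst: "bounded_clinear fst"
  by (simp add: bounded_clinear_def bounded_linear_fst cscale_prod_def)

lemma bcl_snd: "bounded_clinear snd"
  by (simp add: bounded_clinear_def bounded_linear_snd cscale_prod_def)

lemma bcl_inl: "bounded_clinear (\<lambda>x. (x, 0::'b::complex_banach))"
  unfolding bounded_clinear_def cscale_prod_def
  by (auto intro: bounded_linear_Pair bounded_linear_ident bounded_linear_zero)

lemma bcl_inr: "bounded_clinear (\<lambda>x. (0::'b::complex_banach, x))"
  unfolding bounded_clinear_def cscale_prod_def
  by (auto intro: bounded_linear_Pair bounded_linear_ident bounded_linear_zero)

lemma bcl_funpow: "bounded_clinear (A::'a::complex_banach\<Rightarrow>'a) \<Longrightarrow> bounded_clinear (A ^^ n)"
proof (induction n)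
  case 0 show ?case using bcl_id by (simp add: id_def)
next
  case (Suc n)
  then have "bounded_clinear (\<lambda>x. A ((A^^n) x))" using bcl_comp by blast
  then show ?case by (simp add: o_def)
qed

lemma bcl_zero: "bounded_clinear f \<Longrightarrow> f 0 = 0"
  using bcl_linear linear_0 bounded_linear.linear by blast

lemma bcl_add: "bounded_clinear f \<Longrightarrow> f (x + y) = f x + f y"
  using bcl_linear linear_add bounded_linear.linear by blast

lemma bcl_sub: "bounded_clinear f \<Longrightarrow> f (x - y) = f x - f y"
  using bcl_linear linear_diff bounded_linear.linear by blast

lemma bcl_rscale: "bounded_clinear f \<Longrightarrow> f (c *\<^sub>R x) = c *\<^sub>R f x"
  using bcl_linear linear_scale bounded_linear.linear by blast

lemma bcl_cont: "bounded_clinear f \<Longrightarrow> continuous_on S f"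
  using bcl_linear linear_continuous_on by blast

lemma bcl_tendsto: "bounded_clinear f \<Longrightarrow> (g \<longlongrightarrow> l) F \<Longrightarrow> ((\<lambda>n. f (g n)) \<longlongrightarrow> f l) F"
  using bcl_linear bounded_linear.tendsto by blast

lemma csub_0: "csubspace M \<Longrightarrow> 0 \<in> M" by (simp add: csubspace_def)
lemma csub_add: "csubspace M \<Longrightarrow> x \<in> M \<Longrightarrow> y \<in> M \<Longrightarrow> x + y \<in> M" by (simp add: csubspace_def)
lemma csub_scale: "csubspace M \<Longrightarrow> x \<in> M \<Longrightarrow> c *\<^sub>C x \<in> M" by (simp add: csubspace_def)
lemma csub_neg: "csubspace M \<Longrightarrow> x \<in> M \<Longrightarrow> - x \<in> M"
  using csub_scale[of M x "-1"] by (simp add: cscale_minus_one)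
lemma csub_diff: "csubspace M \<Longrightarrow> x \<in> M \<Longrightarrow> y \<in> M \<Longrightarrow> x - y \<in> M"
  using csub_add[of M x "-y"] csub_neg by fastforce
lemma csub_rscale: "csubspace M \<Longrightarrow> x \<in> M \<Longrightarrow> r *\<^sub>R x \<in> M"
  by (simp add: cscale_real csub_scale)

lemma csub_UNIV: "csubspace UNIV" by (simp add: csubspace_def)

lemma csub_ker: "bounded_clinear f \<Longrightarrow> csubspace {x. f x = 0}"
  unfolding csubspace_def by (auto simp: bcl_zero bcl_add bcl_scale)

lemma csub_range: "bounded_clinear f \<Longrightarrow> csubspace (range f)"
  unfolding csubspace_def
  by (auto simp: bcl_zero[symmetric] bcl_add[symmetric] bcl_scale[symmetric])

lemma csub_image: "bounded_clinear f \<Longrightarrow> csubspace M \<Longrightarrow> csubspace (f ` M)"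
  unfolding csubspace_def
  by (auto simp: image_iff) (metis bcl_zero, metis bcl_add, metis bcl_scale)

lemma closed_ker: "bounded_clinear f \<Longrightarrow> closed {x. f x = 0}"
  using bcl_linear by (intro closed_Collect_eq) (auto intro: linear_continuous_on)

lemma cspan_sub: "csubspace (cspan B)"
  unfolding cspan_def csubspace_def by auto

lemma cspan_sup: "B \<subseteq> cspan B"
  unfolding cspan_def by auto

lemma cspan_min: "csubspace M \<Longrightarrow> B \<subseteq> M \<Longrightarrow> cspan B \<subseteq> M"
  unfolding cspan_def by auto

lemma cspan_mono: "A \<subseteq> B \<Longrightarrow> cspan A \<subseteq> cspan B"
  using cspan_min cspan_sub cspan_sup by blast

lemma cspan_empty: "cspan {} = {0}"
proof -
  have "csubspace {0::'a}" by (simp add: csubspace_def)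
  then show ?thesis using cspan_min[of "{0::'a}" "{}"] csub_0[OF cspan_sub, of "{}::'a set"] by auto
qed

lemma cspan_insert: "cspan (insert v B) = {b + c *\<^sub>C v | b c. b \<in> cspan B}"
  (is "_ = ?R")
proof
  have "csubspace ?R"
    unfolding csubspace_def
  proof (intro conjI ballI allI)
    show "0 \<in> ?R" using csub_0[OF cspan_sub[of B]] by (auto intro!: exI[of _ 0] exI[of _ "0::complex"])
  next
    fix x y assume "x \<in> ?R" "y \<in> ?R"
    then obtain b1 c1 b2 c2 where "x = b1 + c1 *\<^sub>C v" "b1 \<in> cspan B" "y = b2 + c2 *\<^sub>C v" "b2 \<in> cspan B" by blast
    then show "x + y \<in> ?R"
      by (auto intro!: exI[of _ "b1+b2"] exI[of _ "c1+c2"] csub_add[OF cspan_sub] simp: cscale_add_left algebra_simps)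
  next
    fix c x assume "x \<in> ?R"
    then obtain b1 c1 where "x = b1 + c1 *\<^sub>C v" "b1 \<in> cspan B" by blast
    then show "c *\<^sub>C x \<in> ?R"
      by (auto intro!: exI[of _ "c *\<^sub>C b1"] exI[of _ "c*c1"] csub_scale[OF cspan_sub] simp: cscale_add_right cscale_cscale)
  qed
  moreover have "insert v B \<subseteq> ?R"
  proof
    fix x assume "x \<in> insert v B"
    then show "x \<in> ?R"
    proof
      assume "x = v" then show ?thesis using csub_0[OF cspan_sub[of B]] by (auto intro!: exI[of _ 0] exI[of _ "1::complex"])
    next
      assume "x \<in> B" then show ?thesis using cspan_sup by (auto intro!: exI[of _ x] exI[of _ "0::complex"])
    qed
  qed
  ultimately show "cspan (insert v B) \<subseteq> ?R" by (rule cspan_min)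
next
  show "?R \<subseteq> cspan (insert v B)"
  proof
    fix x assume "x \<in> ?R"
    then obtain b c where x: "x = b + c *\<^sub>C v" "b \<in> cspan B" by blast
    have "b \<in> cspan (insert v B)" using x(2) cspan_mono[of B "insert v B"] by auto
    moreover have "c *\<^sub>C v \<in> cspan (insert v B)" using cspan_sup csub_scale[OF cspan_sub] by blast
    ultimately show "x \<in> cspan (insert v B)" using x(1) csub_add[OF cspan_sub] by blast
  qed
qed

section \<open>Near-best approximation (Riesz)\<close>

lemma near_best:
  fixes M :: "'a::complex_banach set"
  assumes "closed M" "csubspace M" "y \<notin> M"
  shows "\<exists>m\<in>M. \<forall>m'\<in>M. norm (y - m) \<le> 2 * norm (y - m')"
proof -
  have ne: "M \<noteq> {}" using csub_0[OF assms(2)] by auto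
  have d: "infdist y M > 0" using infdist_pos_not_in_closed[OF assms(1) ne assms(3)] .
  have "infdist y M < 2 * infdist y M" using d by simp
  then obtain m where m: "m \<in> M" "dist y m < 2 * infdist y M"
    unfolding infdist_notempty[OF ne]
    by (subst (asm) cINF_less_iff) (auto simp: ne intro: bdd_belowI[of _ 0])
  show ?thesis
  proof (intro bexI[OF _ m(1)] ballI)
    fix m' assume "m' \<in> M"
    then have "infdist y M \<le> dist y m'" by (rule infdist_le)
    then show "norm (y - m) \<le> 2 * norm (y - m')" using m(2) by (simp add: dist_norm)
  qed
qed

lemma riesz_unit:
  fixes M :: "'a::complex_banach set"
  assumes "closed M" "csubspace M" "y \<notin> M"
  shows "\<exists>m\<in>M. norm (y - m) > 0 \<and> (\<forall>m'\<in>M. norm (y - m) \<le> 2 * norm (y - m'))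
     \<and> (\<forall>k\<in>M. norm ((1 / norm (y - m)) *\<^sub>R (y - m) - k) \<ge> 1/2)"
proof -
  obtain m where m: "m \<in> M" "\<forall>m'\<in>M. norm (y - m) \<le> 2 * norm (y - m')"
    using near_best[OF assms] by blast
  have pos: "norm (y - m) > 0" using m(1) assms(3) by auto
  have "norm ((1 / norm (y - m)) *\<^sub>R (y - m) - k) \<ge> 1/2" if k: "k \<in> M" for k
  proof -
    let ?t = "norm (y - m)"
    have "m + ?t *\<^sub>R k \<in> M" using k m(1) assms(2) by (simp add: csub_add csub_rscale)
    then have "?t \<le> 2 * norm (y - (m + ?t *\<^sub>R k))" using m(2) by blast
    also have "y - (m + ?t *\<^sub>R k) = ?t *\<^sub>R ((1 / ?t) *\<^sub>R (y - m) - k)"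
      using pos by (simp add: algebra_simps)
    also have "norm \<dots> = ?t * norm ((1 / ?t) *\<^sub>R (y - m) - k)" using pos by simp
    finally show ?thesis using pos by (simp add: field_simps)
  qed
  then show ?thesis using m pos by blast
qed

lemma cspan_insert_in: "v \<in> cspan B \<Longrightarrow> cspan (insert v B) = cspan B"
  using cspan_min[OF cspan_sub, of "insert v B" B] cspan_sup[of B] cspan_mono[of B "insert v B"] by auto

lemma closed_cspan_insert:
  fixes B :: "'a::complex_banach set"
  assumes cl: "closed (cspan B)" and v: "v \<notin> cspan B"
  shows "closed (cspan (insert v B))"
proof -
  let ?M = "cspan B"
  have ne: "?M \<noteq> {}" using csub_0[OF cspan_sub] by auto
  define d where "d = infdist v ?M"
  have d: "d > 0" unfolding d_def using infdist_pos_not_in_closed[OF cl ne v] .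
  have key: "cmod c * d \<le> norm (b + c *\<^sub>C v)" if b: "b \<in> ?M" for b c
  proof (cases "c = 0")
    case True then show ?thesis by simp
  next
    case False
    have "- (inverse c *\<^sub>C b) \<in> ?M" using b by (simp add: csub_neg csub_scale cspan_sub)
    then have "d \<le> dist v (- (inverse c *\<^sub>C b))" unfolding d_def by (rule infdist_le)
    also have "\<dots> = norm (v + inverse c *\<^sub>C b)" by (simp add: dist_norm)
    finally have "cmod c * d \<le> cmod c * norm (v + inverse c *\<^sub>C b)" by (simp add: mult_left_mono)
    also have "cmod c * norm (v + inverse c *\<^sub>C b) = norm (c *\<^sub>C (v + inverse c *\<^sub>C b))"
      by (simp add: norm_cscale)
    also have "c *\<^sub>C (v + inverse c *\<^sub>C b) = b + c *\<^sub>C v"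
      using False by (simp add: cscale_add_right cscale_cscale add.commute)
    finally show ?thesis .
  qed
  show ?thesis unfolding cspan_insert closed_sequential_limits
  proof (intro allI impI, elim conjE)
    fix x l assume xin: "\<forall>n. x n \<in> {b + c *\<^sub>C v |b c. b \<in> ?M}" and lim: "x \<longlonglongrightarrow> l"
    have "\<forall>n. \<exists>b c. x n = b + c *\<^sub>C v \<and> b \<in> ?M" using xin by blast
    then obtain b c where bc0: "\<forall>n. x n = b n + c n *\<^sub>C v \<and> b n \<in> ?M" by metis
    then have bc: "\<And>n. x n = b n + c n *\<^sub>C v" "\<And>n. b n \<in> ?M" by auto
    have "Cauchy c"
    proof (rule metric_CauchyI)
      fix e :: real assume e: "e > 0"
      from LIMSEQ_imp_Cauchy[OF lim] have "Cauchy x" .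
      then obtain N where N: "\<And>m n. m \<ge> N \<Longrightarrow> n \<ge> N \<Longrightarrow> dist (x m) (x n) < e * d"
        using e d by (meson metric_CauchyD mult_pos_pos)
      show "\<exists>N. \<forall>m\<ge>N. \<forall>n\<ge>N. dist (c m) (c n) < e"
      proof (intro exI allI impI)
        fix m n assume "m \<ge> N" "n \<ge> N"
        have "x m - x n = (b m - b n) + (c m - c n) *\<^sub>C v"
          by (simp add: bc cscale_add_left[of "c m - c n" "c n", simplified] algebra_simps)
        then have "cmod (c m - c n) * d \<le> norm (x m - x n)"
          using key[of "b m - b n" "c m - c n"] bc(2) by (simp add: csub_diff cspan_sub)
        also have "\<dots> < e * d" using N \<open>m \<ge> N\<close> \<open>n \<ge> N\<close> by (simp add: dist_norm)
        finally show "dist (c m) (c n) < e" using d by (simp add: dist_norm)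
      qed
    qed
    then obtain c0 where c0: "c \<longlonglongrightarrow> c0" using Cauchy_convergent_iff convergent_def by blast
    have cv: "(\<lambda>n. c n *\<^sub>C v) \<longlonglongrightarrow> c0 *\<^sub>C v"
    proof (rule LIM_zero_cancel, rule tendsto_norm_zero_cancel)
      have "(\<lambda>n. cmod (c n - c0) * norm v) \<longlonglongrightarrow> 0 * norm v"
        using c0 by (intro tendsto_intros) (simp add: LIM_zero_iff tendsto_norm_zero_iff)
      moreover have "c n *\<^sub>C v - c0 *\<^sub>C v = (c n - c0) *\<^sub>C v" for n
        using cscale_add_left[of "c n - c0" c0 v] by (simp add: algebra_simps)
      ultimately show "(\<lambda>n. norm (c n *\<^sub>C v - c0 *\<^sub>C v)) \<longlonglongrightarrow> 0" by (simp add: norm_cscale)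
    qed
    have "b \<longlonglongrightarrow> l - c0 *\<^sub>C v"
    proof -
      have "(\<lambda>n. x n - c n *\<^sub>C v) \<longlonglongrightarrow> l - c0 *\<^sub>C v" by (intro tendsto_diff lim cv)
      then show ?thesis by (simp add: bc)
    qed
    then have "l - c0 *\<^sub>C v \<in> ?M" using cl bc(2) closed_sequential_limits by blast
    then show "l \<in> {b + c *\<^sub>C v |b c. b \<in> ?M}" by (auto intro!: exI[of _ "l - c0 *\<^sub>C v"] exI[of _ c0])
  qed
qed

lemma closed_cspan: "finite B \<Longrightarrow> closed (cspan (B::'a::complex_banach set))"
proof (induction B rule: finite_induct)
  case empty then show ?case by (simp add: cspan_empty)
next
  case (insert v B)
  show ?case
  proof (cases "v \<in> cspan B")
    case True then show ?thesis using insert by (simp add: cspan_insert_in)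
  next
    case False then show ?thesis using insert closed_cspan_insert by blast
  qed
qed

definition kop :: "('a::real_normed_vector \<Rightarrow> 'b::real_normed_vector) \<Rightarrow> bool" where
  "kop K \<longleftrightarrow> (\<forall>x::nat\<Rightarrow>'a. bounded (range x) \<longrightarrow> (\<exists>r::nat\<Rightarrow>nat. strict_mono r \<and> convergent (\<lambda>n. K (x (r n)))))"

lemma kopD: "kop K \<Longrightarrow> bounded (range (x::nat\<Rightarrow>_)) \<Longrightarrow> \<exists>r::nat\<Rightarrow>nat. strict_mono r \<and> convergent (\<lambda>n. K (x (r n)))"
  by (simp add: kop_def)

lemma bounded_range_subseq: "bounded (range x) \<Longrightarrow> bounded (range (\<lambda>n. x (r n)))"
  by (rule bounded_subset) auto

lemma compact_op_kop:
  assumes "compact_op S"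
  shows "kop S"
  unfolding kop_def
proof (intro allI impI)
  fix x :: "nat \<Rightarrow> 'a" assume "bounded (range x)"
  then obtain a where a: "\<And>n. norm (x n) \<le> a" unfolding bounded_iff by blast
  define b where "b = max a 1"
  have b1: "b > 0" unfolding b_def by simp
  have b2: "norm (x n) \<le> b" for n unfolding b_def by (rule max.coboundedI1[OF a])
  have lin: "bounded_linear S" using assms by (simp add: compact_op_def bounded_clinear_def)
  let ?K = "closure (S ` cball 0 1)"
  have "compact ?K" using assms unfolding compact_op_def by blast
  then have sc: "seq_compact ?K" by (rule compact_imp_seq_compact)
  have "\<forall>n. S ((1/b) *\<^sub>R x n) \<in> ?K"
  proof
    fix n
    have e: "norm ((1/b) *\<^sub>R x n) = norm (x n) / b" using b1 by simp
    have "norm (x n) / b \<le> 1" using b2[of n] by (simp add: divide_le_eq_1_pos[OF b1])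
    then have "(1/b) *\<^sub>R x n \<in> cball 0 1" unfolding mem_cball_0 e .
    then have "S ((1/b) *\<^sub>R x n) \<in> S ` cball 0 1" by (rule imageI)
    then show "S ((1/b) *\<^sub>R x n) \<in> ?K" by (rule subsetD[OF closure_subset])
  qed
  then obtain l r where lr: "strict_mono r" "((\<lambda>n. S ((1/b) *\<^sub>R x n)) \<circ> r) \<longlonglongrightarrow> l"
    by (rule seq_compactE[OF sc])
  have eq: "S (x (r n)) = b *\<^sub>R S ((1/b) *\<^sub>R x (r n))" for n
  proof -
    have bc: "bounded_clinear S" using assms unfolding compact_op_def by blast
    have "b *\<^sub>R S ((1/b) *\<^sub>R x (r n)) = b *\<^sub>R ((1/b) *\<^sub>R S (x (r n)))" by (simp only: bcl_rscale[OF bc])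
    also have "\<dots> = S (x (r n))" using b1 by simp
    finally show ?thesis by (rule sym)
  qed
  have "(\<lambda>n. b *\<^sub>R S ((1/b) *\<^sub>R x (r n))) \<longlonglongrightarrow> b *\<^sub>R l"
    using lr(2) by (intro tendsto_scaleR tendsto_const) (simp add: o_def)
  then have "convergent (\<lambda>n. S (x (r n)))" unfolding eq convergent_def by blast
  then show "\<exists>r. strict_mono r \<and> convergent (\<lambda>n. S (x (r n)))" using lr(1) by blast
qed

lemma kop_comp_left:
  assumes "kop K" "bounded_linear L"
  shows "kop (\<lambda>x. L (K x))"
  unfolding kop_def
proof (intro allI impI)
  fix x :: "nat \<Rightarrow> 'a" assume "bounded (range x)"
  then obtain r where r: "strict_mono r" "convergent (\<lambda>n. K (x (r n)))" using kopD[OF assms(1)] by blast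
  then obtain l where "(\<lambda>n. K (x (r n))) \<longlonglongrightarrow> l" unfolding convergent_def by blast
  then have "(\<lambda>n. L (K (x (r n)))) \<longlonglongrightarrow> L l" using assms(2) bounded_linear.tendsto by blast
  then show "\<exists>r. strict_mono r \<and> convergent (\<lambda>n. L (K (x (r n))))" using r(1) unfolding convergent_def by blast
qed

lemma kop_comp_right:
  fixes K :: "'a::real_normed_vector \<Rightarrow> 'b::real_normed_vector" and B :: "'c::real_normed_vector \<Rightarrow> 'a"
  assumes "kop K" "bounded_linear B"
  shows "kop (\<lambda>x. K (B x))"
  unfolding kop_def
proof (intro allI impI)
  fix x :: "nat \<Rightarrow> 'c" assume bx: "bounded (range x)"
  have "bounded (B ` range x)" using bounded_linear_image[OF bx assms(2)] .
  then have "bounded (range (\<lambda>n. B (x n)))" by (simp add: image_image)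
  then show "\<exists>r. strict_mono r \<and> convergent (\<lambda>n. K (B (x (r n))))" using kopD[OF assms(1)] by blast
qed

lemma kop_add:
  assumes "kop K1" "kop K2"
  shows "kop (\<lambda>x. K1 x + K2 x)"
  unfolding kop_def
proof (intro allI impI)
  fix x :: "nat \<Rightarrow> 'a" assume bx: "bounded (range x)"
  obtain r1 where r1: "strict_mono r1" "convergent (\<lambda>n. K1 (x (r1 n)))" using kopD[OF assms(1) bx] by blast
  obtain r2 where r2: "strict_mono r2" "convergent (\<lambda>n. K2 (x (r1 (r2 n))))"
    using kopD[OF assms(2) bounded_range_subseq[OF bx, of r1]] by blast
  have "convergent (\<lambda>n. K1 (x (r1 (r2 n))))"
    using convergent_subseq_convergent[OF r1(2) r2(1)] by (simp add: o_def)
  then have "convergent (\<lambda>n. K1 (x (r1 (r2 n))) + K2 (x (r1 (r2 n))))" using r2(2) by (rule convergent_add)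
  moreover have "strict_mono (r1 \<circ> r2)" using r1(1) r2(1) by (rule strict_mono_o)
  ultimately show "\<exists>r. strict_mono r \<and> convergent (\<lambda>n. K1 (x (r n)) + K2 (x (r n)))"
    by (intro exI[of _ "r1 \<circ> r2"]) (simp add: o_def)
qed

lemma kop_sep_False:
  fixes x :: "nat \<Rightarrow> 'a::real_normed_vector"
  assumes "kop K" "bounded (range x)" "\<And>m n. m < n \<Longrightarrow> norm (K (x n) - K (x m)) \<ge> 1/2"
  shows False
proof -
  obtain r where r: "strict_mono r" "convergent (\<lambda>n. K (x (r n)))" using kopD[OF assms(1,2)] by blast
  have "Cauchy (\<lambda>n. K (x (r n)))" by (rule convergent_Cauchy[OF r(2)])
  then obtain N where N: "\<forall>m\<ge>N. \<forall>n\<ge>N. dist (K (x (r m))) (K (x (r n))) < 1/2"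
    using metric_CauchyD[of "\<lambda>n. K (x (r n))" "1/2"] by auto
  have "r N < r (Suc N)" using r(1) by (simp add: strict_mono_def)
  then have "norm (K (x (r (Suc N))) - K (x (r N))) \<ge> 1/2" by (rule assms(3))
  moreover have "dist (K (x (r (Suc N)))) (K (x (r N))) < 1/2" using N[rule_format, of "Suc N" N] by simp
  ultimately show False by (simp add: dist_norm)
qed

lemma perturb_conv:
  fixes u :: "nat \<Rightarrow> 'a::real_normed_vector"
  assumes "kop K" "bounded_linear B" "\<And>x. x = B x + K x" "bounded (range u)" "(\<lambda>n. B (u n)) \<longlonglongrightarrow> y"
  shows "\<exists>r w. strict_mono r \<and> (\<lambda>n. u (r n)) \<longlonglongrightarrow> w \<and> B w = y"
proof -
  obtain r where r: "strict_mono r" "convergent (\<lambda>n. K (u (r n)))" using kopD[OF assms(1,4)] by blast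
  then obtain k where k: "(\<lambda>n. K (u (r n))) \<longlonglongrightarrow> k" unfolding convergent_def by blast
  have "(\<lambda>n. B (u (r n))) \<longlonglongrightarrow> y" using LIMSEQ_subseq_LIMSEQ[OF assms(5) r(1)] by (simp add: o_def)
  then have "(\<lambda>n. B (u (r n)) + K (u (r n))) \<longlonglongrightarrow> y + k" using k by (rule tendsto_add)
  then have w: "(\<lambda>n. u (r n)) \<longlonglongrightarrow> y + k" proof -
    have "(\<lambda>n. B (u (r n)) + K (u (r n))) = (\<lambda>n. u (r n))" using assms(3) by metis
    then show ?thesis using \<open>(\<lambda>n. B (u (r n)) + K (u (r n))) \<longlonglongrightarrow> y + k\<close> by simp
  qed
  then have "(\<lambda>n. B (u (r n))) \<longlonglongrightarrow> B (y + k)" using assms(2) bounded_linear.tendsto by blast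
  then have "B (y + k) = y" using \<open>(\<lambda>n. B (u (r n))) \<longlonglongrightarrow> y\<close> LIMSEQ_unique by blast
  then show ?thesis using r(1) w by blast
qed

lemma fp_Suc: "((A::'a\<Rightarrow>'a) ^^ Suc n) x = A ((A ^^ n) x)" by simp
lemma fp_Suc_right: "((A::'a\<Rightarrow>'a) ^^ Suc n) x = (A ^^ n) (A x)"
  by (simp only: funpow_Suc_right o_apply)
lemma fp_add: "((A::'a\<Rightarrow>'a) ^^ (m + n)) x = (A ^^ m) ((A ^^ n) x)"
  by (simp only: funpow_add o_apply)

lemma kop_zero: "kop (\<lambda>x::'a::real_normed_vector. (0::'b::real_normed_vector))"
  unfolding kop_def by (auto intro!: exI[of _ id] simp: strict_mono_id convergent_const)

lemma kop_cong:
  assumes "kop K" "\<And>x. K x = K' x" shows "kop K'"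
proof -
  have "K = K'" by (rule ext, rule assms(2))
  then show "kop K'" using assms(1) by simp
qed

lemma kop_pow:
  fixes A :: "'a::complex_banach \<Rightarrow> 'a"
  assumes A: "bounded_clinear A" and C: "kop (\<lambda>x. x - A x)"
  shows "kop (\<lambda>x. x - (A ^^ n) x)"
proof (induction n)
  case 0
  show ?case by (rule kop_cong[OF kop_zero]) simp
next
  case (Suc n)
  have lin: "bounded_linear (A ^^ n)" using bcl_linear[OF bcl_funpow[OF A]] .
  have "kop (\<lambda>x. (x - (A ^^ n) x) + ((A ^^ n) x - A ((A ^^ n) x)))"
    by (rule kop_add[OF Suc kop_comp_right[OF C lin]])
  then show ?case by (rule kop_cong) (simp only: fp_Suc, simp)
qed

section \<open>Closed range of compact perturbations of the identity\<close>

lemma dist_ker_bound: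
  fixes B :: "'a::complex_banach \<Rightarrow> 'a"
  assumes B: "bounded_clinear B" and K: "kop K" and eq: "\<And>x. x = B x + K x"
  shows "\<exists>c. \<forall>x. \<exists>k\<in>{x. B x = 0}. norm (x - k) \<le> c * norm (B x)"
proof (rule ccontr)
  let ?N = "{x. B x = 0}"
  have clN: "closed ?N" by (rule closed_ker[OF B])
  have suN: "csubspace ?N" by (rule csub_ker[OF B])
  assume "\<not> ?thesis"
  then have "\<forall>n::nat. \<exists>x. \<forall>k\<in>?N. norm (x - k) > real (Suc n) * norm (B x)"
    by (simp add: not_le)
  then obtain x where x: "\<And>n k. k \<in> ?N \<Longrightarrow> norm (x n - k) > real (Suc n) * norm (B (x n))"
    by metis
  have xn: "x n \<notin> ?N" for n
  proof
    assume "x n \<in> ?N"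
    then have "norm (x n - x n) > real (Suc n) * norm (B (x n))" by (rule x)
    then show False using \<open>x n \<in> ?N\<close> by simp
  qed
  have "\<forall>n. \<exists>m\<in>?N. norm (x n - m) > 0 \<and> (\<forall>m'\<in>?N. norm (x n - m) \<le> 2 * norm (x n - m'))
     \<and> (\<forall>k\<in>?N. norm ((1 / norm (x n - m)) *\<^sub>R (x n - m) - k) \<ge> 1/2)"
    using riesz_unit[OF clN suN xn] by blast
  then obtain m where m: "\<And>n. m n \<in> ?N" "\<And>n. norm (x n - m n) > 0"
    "\<And>n k. k \<in> ?N \<Longrightarrow> norm ((1 / norm (x n - m n)) *\<^sub>R (x n - m n) - k) \<ge> 1/2"
    by metis
  define v where "v n = (1 / norm (x n - m n)) *\<^sub>R (x n - m n)" for n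
  have nv: "norm (v n) = 1" for n using m(2)[of n] by (simp add: v_def)
  have Bv: "norm (B (v n)) < 1 / real (Suc n)" for n
  proof -
    have Bm: "B (m n) = 0" using m(1)[of n] by simp
    have "B (v n) = (1 / norm (x n - m n)) *\<^sub>R B (x n)"
      unfolding v_def by (simp add: bcl_rscale[OF B] bcl_sub[OF B] Bm)
    then have e: "norm (B (v n)) = norm (B (x n)) / norm (x n - m n)" using m(2)[of n] by simp
    have "norm (x n - m n) > real (Suc n) * norm (B (x n))" by (rule x[OF m(1)])
    then show ?thesis unfolding e using m(2)[of n]
      by (simp add: divide_less_eq field_simps del: of_nat_Suc)
  qed
  have "(\<lambda>n. B (v n)) \<longlonglongrightarrow> 0" by (rule LIMSEQ_norm_0) (rule Bv)
  moreover have "bounded (range v)" unfolding bounded_iff using nv by auto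
  ultimately obtain r w where rw: "strict_mono r" "(\<lambda>n. v (r n)) \<longlonglongrightarrow> w" "B w = 0"
    using perturb_conv[OF K bcl_linear[OF B] eq] by blast
  have far: "norm (v (r n) - w) \<ge> 1/2" for n
    unfolding v_def using m(3)[of w "r n"] rw(3) by simp
  have "(\<lambda>n. v (r n) - w) \<longlonglongrightarrow> 0" using rw(2) by (rule LIM_zero)
  then have "(\<lambda>n. norm (v (r n) - w)) \<longlonglongrightarrow> 0" by (rule tendsto_norm_zero)
  then obtain n0 where "\<forall>n\<ge>n0. norm (norm (v (r n) - w) - 0) < 1/2"
    using LIMSEQ_D[of "\<lambda>n. norm (v (r n) - w)" 0 "1/2"] by auto
  then have "norm (v (r n0) - w) < 1/2" by simp
  then show False using far[of n0] by simp
qed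

lemma closed_range_perturb:
  fixes B :: "'a::complex_banach \<Rightarrow> 'a"
  assumes B: "bounded_clinear B" and K: "kop K" and eq: "\<And>x. x = B x + K x"
  shows "closed (range B)"
  unfolding closed_sequential_limits
proof (intro allI impI, elim conjE)
  fix z y assume zr: "\<forall>n. z n \<in> range B" and zy: "z \<longlonglongrightarrow> y"
  obtain c where c: "\<And>x. \<exists>k\<in>{x. B x = 0}. norm (x - k) \<le> c * norm (B x)"
    using dist_ker_bound[OF B K eq] by blast
  have "\<forall>n. \<exists>x. z n = B x" using zr by (simp add: image_iff)
  then obtain x where x: "\<And>n. z n = B (x n)" by metis
  have "\<forall>n. \<exists>k. B k = 0 \<and> norm (x n - k) \<le> c * norm (B (x n))" using c by (simp add: Bex_def)
  then obtain k where k0: "\<forall>n. B (k n) = 0 \<and> norm (x n - k n) \<le> c * norm (B (x n))" by metis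
  then have k: "\<And>n. B (k n) = 0" "\<And>n. norm (x n - k n) \<le> c * norm (B (x n))" by auto
  define u where "u n = x n - k n" for n
  have Bu: "B (u n) = z n" for n unfolding u_def by (simp add: bcl_sub[OF B] k(1) x)
  have "Bseq z" using zy by (intro convergent_imp_Bseq) (auto simp: convergent_def)
  then obtain Kz where Kz: "\<And>n. norm (z n) \<le> Kz" unfolding Bseq_def by blast
  have "norm (u n) \<le> \<bar>c\<bar> * Kz" for n
  proof -
    have "norm (u n) \<le> c * norm (z n)" using k(2)[of n] by (simp add: u_def x)
    also have "\<dots> \<le> \<bar>c\<bar> * norm (z n)" by (simp add: mult_right_mono)
    also have "\<dots> \<le> \<bar>c\<bar> * Kz" by (simp add: Kz mult_left_mono)
    finally show ?thesis .
  qed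
  then have "bounded (range u)" unfolding bounded_iff by blast
  moreover have "(\<lambda>n. B (u n)) \<longlonglongrightarrow> y" unfolding Bu using zy .
  ultimately obtain r w where "B w = y" using perturb_conv[OF K bcl_linear[OF B] eq] by blast
  then show "y \<in> range B" by blast
qed

primrec iterW :: "('a set \<Rightarrow> 'a) \<Rightarrow> nat \<Rightarrow> 'a set" where
  "iterW p 0 = {}"
| "iterW p (Suc n) = insert (p (iterW p n)) (iterW p n)"

lemma iterW_finite: "finite (iterW p n)" by (induction n) auto

lemma iterW_mem: "m < n \<Longrightarrow> p (iterW p m) \<in> iterW p n"
proof (induction n)
  case 0 then show ?case by simp
next
  case (Suc n) then show ?case by (cases "m = n") auto
qed

lemma fin_dim_fixed:
  fixes N :: "'a::complex_banach set"
  assumes cl: "closed N" and su: "csubspace N" and K: "kop K" and fx: "\<And>x. x \<in> N \<Longrightarrow> K x = x"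
  shows "\<exists>B. finite B \<and> N \<subseteq> cspan B"
proof (rule ccontr)
  assume nf: "\<not> ?thesis"
  define P where "P S v \<longleftrightarrow> v \<in> N \<and> norm v = 1 \<and> (\<forall>k\<in>cspan S. norm (v - k) \<ge> 1/2)" for S v
  have ex: "\<exists>v. P S v" if S: "finite S" "S \<subseteq> N" for S
  proof -
    have "\<not> N \<subseteq> cspan S" using nf S(1) by blast
    then obtain y where y: "y \<in> N" "y \<notin> cspan S" by blast
    have sN: "cspan S \<subseteq> N" by (rule cspan_min[OF su S(2)])
    obtain m where m: "m \<in> cspan S" "norm (y - m) > 0"
      "\<And>k. k \<in> cspan S \<Longrightarrow> norm ((1 / norm (y - m)) *\<^sub>R (y - m) - k) \<ge> 1/2"
      using riesz_unit[OF closed_cspan[OF S(1)] cspan_sub y(2)] by blast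
    have "(1 / norm (y - m)) *\<^sub>R (y - m) \<in> N"
      using y(1) m(1) sN by (intro csub_rscale[OF su] csub_diff[OF su]) auto
    moreover have "norm ((1 / norm (y - m)) *\<^sub>R (y - m)) = 1" using m(2) by simp
    ultimately show ?thesis unfolding P_def using m(3) by blast
  qed
  have "\<forall>S. \<exists>v. finite S \<and> S \<subseteq> N \<longrightarrow> P S v" using ex by blast
  then obtain p where p: "\<And>S. finite S \<Longrightarrow> S \<subseteq> N \<Longrightarrow> P S (p S)" by metis
  have W: "iterW p n \<subseteq> N \<and> P (iterW p n) (p (iterW p n))" for n
  proof (induction n)
    case 0
    have "P {} (p {})" by (rule p) auto
    then show ?case by simp
  next
    case (Suc n)
    have sub: "iterW p (Suc n) \<subseteq> N" using Suc P_def by auto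
    have "P (iterW p (Suc n)) (p (iterW p (Suc n)))" by (rule p[OF iterW_finite sub])
    then show ?case using sub by blast
  qed
  define z where "z n = p (iterW p n)" for n
  have zP: "P (iterW p n) (z n)" for n using W unfolding z_def by blast
  have "bounded (range z)" unfolding bounded_iff using zP unfolding P_def by auto
  moreover have "norm (K (z n) - K (z m)) \<ge> 1/2" if "m < n" for m n
  proof -
    have zN: "z n \<in> N" "z m \<in> N" using zP unfolding P_def by auto
    have "z m \<in> iterW p n" unfolding z_def by (rule iterW_mem[OF that])
    then have "z m \<in> cspan (iterW p n)" using cspan_sup by blast
    then have "norm (z n - z m) \<ge> 1/2" using zP[of n] unfolding P_def by blast
    then show ?thesis using fx zN by simp
  qed
  ultimately show False by (rule kop_sep_False[OF K])
qed

section \<open>Ascent and descent\<close>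

lemma ker_mono:
  fixes A :: "'a::complex_banach \<Rightarrow> 'a"
  assumes A: "bounded_clinear A" and "a \<le> b" and "(A ^^ a) x = 0"
  shows "(A ^^ b) x = 0"
proof -
  obtain d where b: "b = d + a" using \<open>a \<le> b\<close> by (metis add.commute le_add_diff_inverse)
  have "(A ^^ b) x = (A ^^ d) ((A ^^ a) x)" unfolding b by (rule fp_add)
  also have "\<dots> = 0" using assms(3) bcl_zero[OF bcl_funpow[OF A]] by simp
  finally show ?thesis .
qed

lemma range_mono:
  fixes A :: "'a::complex_banach \<Rightarrow> 'a"
  assumes "a \<le> b" and "y \<in> range (A ^^ b)"
  shows "y \<in> range (A ^^ a)"
proof -
  obtain d where b: "b = a + d" using \<open>a \<le> b\<close> by (metis le_add_diff_inverse)
  obtain z where "y = (A ^^ b) z" using assms(2) by blast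
  then have "y = (A ^^ a) ((A ^^ d) z)" unfolding b by (simp only: fp_add)
  then show ?thesis by (rule image_eqI) simp
qed

lemma ascent:
  fixes A :: "'a::complex_banach \<Rightarrow> 'a"
  assumes A: "bounded_clinear A" and C: "kop C" and eq: "\<And>x. C x = x - A x"
  shows "\<exists>p. \<forall>x. (A ^^ Suc p) x = 0 \<longrightarrow> (A ^^ p) x = 0"
proof (rule ccontr)
  assume "\<not> ?thesis"
  then have "\<forall>p. \<exists>y. (A ^^ Suc p) y = 0 \<and> (A ^^ p) y \<noteq> 0" by simp
  then obtain y where y: "\<And>p. (A ^^ Suc p) (y p) = 0" "\<And>p. (A ^^ p) (y p) \<noteq> 0" by metis
  let ?N = "\<lambda>p. {x. (A ^^ p) x = 0}"
  have clN: "closed (?N p)" for p by (rule closed_ker[OF bcl_funpow[OF A]])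
  have suN: "csubspace (?N p)" for p by (rule csub_ker[OF bcl_funpow[OF A]])
  have yn: "y p \<notin> ?N p" for p using y(2) by simp
  have "\<forall>p. \<exists>m\<in>?N p. norm (y p - m) > 0 \<and> (\<forall>m'\<in>?N p. norm (y p - m) \<le> 2 * norm (y p - m'))
     \<and> (\<forall>k\<in>?N p. norm ((1 / norm (y p - m)) *\<^sub>R (y p - m) - k) \<ge> 1/2)"
    using riesz_unit[OF clN suN yn] by blast
  then obtain m where m: "\<And>p. m p \<in> ?N p" "\<And>p. norm (y p - m p) > 0"
    "\<And>p k. k \<in> ?N p \<Longrightarrow> norm ((1 / norm (y p - m p)) *\<^sub>R (y p - m p) - k) \<ge> 1/2"
    by metis
  define v where "v p = (1 / norm (y p - m p)) *\<^sub>R (y p - m p)" for p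
  have nv: "norm (v p) = 1" for p using m(2)[of p] by (simp add: v_def)
  have vker: "(A ^^ Suc p) (v p) = 0" for p
  proof -
    have "(A ^^ p) (m p) = 0" using m(1)[of p] by simp
    then have m1: "(A ^^ Suc p) (m p) = 0" by (rule ker_mono[OF A le_SucI[OF order_refl]])
    show ?thesis unfolding v_def
      by (simp only: bcl_rscale[OF bcl_funpow[OF A]] bcl_sub[OF bcl_funpow[OF A]] y(1) m1) simp
  qed
  have vfar: "norm (v p - k) \<ge> 1/2" if "k \<in> ?N p" for p k using m(3)[OF that] by (simp add: v_def)
  have "bounded (range v)" unfolding bounded_iff using nv by auto
  moreover have "norm (C (v n) - C (v q)) \<ge> 1/2" if "q < n" for q n
  proof -
    let ?k = "A (v n) + v q - A (v q)"
    have "(A ^^ n) (A (v n)) = 0" using vker[of n] by (simp only: fp_Suc_right)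
    moreover have "(A ^^ n) (v q) = 0" by (rule ker_mono[OF A Suc_leI[OF that] vker[of q]])
    moreover have "(A ^^ n) (A (v q)) = 0"
    proof -
      have "(A ^^ Suc n) (v q) = 0" by (rule ker_mono[OF A le_SucI[OF Suc_leI[OF that]] vker[of q]])
      then show ?thesis by (simp only: fp_Suc_right)
    qed
    ultimately have "?k \<in> ?N n"
      by (simp add: bcl_add[OF bcl_funpow[OF A]] bcl_sub[OF bcl_funpow[OF A]])
    then have "norm (v n - ?k) \<ge> 1/2" by (rule vfar)
    moreover have "C (v n) - C (v q) = v n - ?k" by (simp add: eq algebra_simps)
    ultimately show ?thesis by simp
  qed
  ultimately show False by (rule kop_sep_False[OF C])
qed

lemma descent:
  fixes A :: "'a::complex_banach \<Rightarrow> 'a"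
  assumes A: "bounded_clinear A" and C: "kop C" and eq: "\<And>x. C x = x - A x"
  shows "\<exists>q. range (A ^^ q) \<subseteq> range (A ^^ Suc q)"
proof (rule ccontr)
  assume "\<not> ?thesis"
  then have "\<forall>q. \<exists>y. y \<in> range (A ^^ q) \<and> y \<notin> range (A ^^ Suc q)" by blast
  then obtain y where y: "\<And>q. y q \<in> range (A ^^ q)" "\<And>q. y q \<notin> range (A ^^ Suc q)" by metis
  let ?R = "\<lambda>q. range (A ^^ q)"
  have kpow: "kop (\<lambda>x. x - (A ^^ q) x)" for q
    by (rule kop_pow[OF A]) (rule kop_cong[OF C eq])
  have clR: "closed (?R q)" for q
    by (rule closed_range_perturb[OF bcl_funpow[OF A] kpow]) simp
  have suR: "csubspace (?R q)" for q by (rule csub_range[OF bcl_funpow[OF A]])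
  have "\<forall>q. \<exists>m\<in>?R (Suc q). norm (y q - m) > 0 \<and> (\<forall>m'\<in>?R (Suc q). norm (y q - m) \<le> 2 * norm (y q - m'))
     \<and> (\<forall>k\<in>?R (Suc q). norm ((1 / norm (y q - m)) *\<^sub>R (y q - m) - k) \<ge> 1/2)"
    using riesz_unit[OF clR suR y(2)] by blast
  then obtain m where m: "\<And>q. m q \<in> ?R (Suc q)" "\<And>q. norm (y q - m q) > 0"
    "\<And>q k. k \<in> ?R (Suc q) \<Longrightarrow> norm ((1 / norm (y q - m q)) *\<^sub>R (y q - m q) - k) \<ge> 1/2"
    by metis
  define v where "v q = (1 / norm (y q - m q)) *\<^sub>R (y q - m q)" for q
  have nv: "norm (v q) = 1" for q using m(2)[of q] by (simp add: v_def)
  have vR: "v q \<in> ?R q" for q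
  proof -
    have "m q \<in> ?R q" using range_mono[of q "Suc q" "m q" A] m(1) by simp
    then show ?thesis unfolding v_def using y(1)[of q] suR[of q] by (intro csub_rscale csub_diff) auto
  qed
  have vfar: "norm (v q - k) \<ge> 1/2" if "k \<in> ?R (Suc q)" for q k using m(3)[OF that] by (simp add: v_def)
  have AR: "A w \<in> ?R (Suc q)" if w: "w \<in> ?R q" for w q
  proof -
    obtain z where "w = (A ^^ q) z" using w by blast
    then have "A w = (A ^^ Suc q) z" by simp
    then show ?thesis by (rule image_eqI) simp
  qed
  have "bounded (range v)" unfolding bounded_iff using nv by auto
  moreover have "norm (C (v n) - C (v q)) \<ge> 1/2" if "q < n" for q n
  proof -
    let ?k = "A (v q) + v n - A (v n)"
    have "A (v q) \<in> ?R (Suc q)" by (rule AR[OF vR])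
    moreover have "v n \<in> ?R (Suc q)" using range_mono[of "Suc q" n "v n" A] vR[of n] that by simp
    moreover have "A (v n) \<in> ?R (Suc q)" using range_mono[of "Suc q" "Suc n" "A (v n)" A] AR[OF vR[of n]] that by simp
    ultimately have "?k \<in> ?R (Suc q)" using suR[of "Suc q"] by (intro csub_add csub_diff) auto
    then have "norm (v q - ?k) \<ge> 1/2" by (rule vfar)
    moreover have "C (v q) - C (v n) = v q - ?k" by (simp add: eq algebra_simps)
    ultimately have "norm (C (v q) - C (v n)) \<ge> 1/2" by simp
    then show ?thesis by (simp only: norm_minus_commute)
  qed
  ultimately show False by (rule kop_sep_False[OF C])
qed

lemma riesz_decomp:
  fixes C :: "'a::complex_banach \<Rightarrow> 'a"
  assumes C: "kop C" and bC: "bounded_clinear C" and inf: "infinite_dim (UNIV :: 'a set)"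
  shows "\<exists>R. complemented R \<and> infinite_dim R \<and> (\<forall>y\<in>R. y - C y = 0 \<longrightarrow> y = 0)"
proof -
  define A where "A x = x - C x" for x
  have A: "bounded_clinear A" unfolding A_def by (rule bcl_diff[OF bcl_id bC])
  have eq: "C x = x - A x" for x by (simp add: A_def)
  have bAp: "bounded_clinear (A ^^ n)" for n by (rule bcl_funpow[OF A])
  obtain p where p: "\<And>x. (A ^^ Suc p) x = 0 \<Longrightarrow> (A ^^ p) x = 0" using ascent[OF A C eq] by blast
  obtain q where q: "range (A ^^ q) \<subseteq> range (A ^^ Suc q)" using descent[OF A C eq] by blast
  have kerstab: "(A ^^ (p + k)) x = 0 \<Longrightarrow> (A ^^ p) x = 0" for k x
  proof (induction k arbitrary: x)
    case 0 then show ?case by simp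
  next
    case (Suc k)
    have "(A ^^ (Suc p + k)) x = 0" using Suc.prems by simp
    then have "(A ^^ Suc p) ((A ^^ k) x) = 0" by (simp only: fp_add)
    then have "(A ^^ p) ((A ^^ k) x) = 0" by (rule p)
    then have "(A ^^ (p + k)) x = 0" by (simp only: fp_add)
    then show ?case by (rule Suc.IH)
  qed
  have rangestab: "range (A ^^ q) \<subseteq> range (A ^^ (q + k))" for k
  proof (induction k)
    case 0 then show ?case by simp
  next
    case (Suc k)
    show ?case
    proof
      fix y assume "y \<in> range (A ^^ q)"
      then have "y \<in> range (A ^^ (q + k))" using Suc by blast
      then obtain z where z: "y = (A ^^ (k + q)) z" by (auto simp: add.commute)
      have "(A ^^ q) z \<in> range (A ^^ Suc q)" using q by blast
      then obtain w where w: "(A ^^ q) z = (A ^^ Suc q) w" by blast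
      have "y = (A ^^ k) ((A ^^ q) z)" unfolding z by (rule fp_add)
      also have "\<dots> = (A ^^ k) ((A ^^ Suc q) w)" by (simp only: w)
      also have "\<dots> = (A ^^ (k + Suc q)) w" by (simp only: fp_add)
      also have "k + Suc q = q + Suc k" by simp
      finally show "y \<in> range (A ^^ (q + Suc k))" by simp
    qed
  qed
  define s where "s = Suc (p + q)"
  define P where "P = A ^^ s"
  have bP: "bounded_clinear P" unfolding P_def by (rule bAp)
  have PP: "P (P z) = (A ^^ (s + s)) z" for z unfolding P_def by (simp only: fp_add)
  have ker2: "P z = 0" if "P (P z) = 0" for z
  proof -
    have e: "p + (s + s - p) = s + s" by (simp add: s_def)
    have "(A ^^ (p + (s + s - p))) z = 0" using that unfolding PP e .
    then have pz: "(A ^^ p) z = 0" by (rule kerstab)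
    have ps: "p \<le> s" by (simp add: s_def)
    show "P z = 0" unfolding P_def by (rule ker_mono[OF A ps pz])
  qed
  have ran2: "\<exists>z. P y = P (P z)" for y
  proof -
    have "P y \<in> range (A ^^ q)" using range_mono[of q s "P y" A] unfolding P_def by (simp add: s_def)
    then have "P y \<in> range (A ^^ (q + (s + s - q)))" using rangestab by blast
    moreover have "q + (s + s - q) = s + s" by (simp add: s_def)
    ultimately have "P y \<in> range (A ^^ (s + s))" by simp
    then obtain z where "P y = (A ^^ (s + s)) z" by blast
    then show ?thesis unfolding PP[symmetric] by blast
  qed
  let ?N = "{x. P x = 0}"
  let ?R = "range P"
  have kP: "kop (\<lambda>x. x - P x)" unfolding P_def by (rule kop_pow[OF A]) (rule kop_cong[OF C eq])
  have clR: "closed ?R" by (rule closed_range_perturb[OF bP kP]) simp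
  have suR: "csubspace ?R" by (rule csub_range[OF bP])
  have clN: "closed ?N" by (rule closed_ker[OF bP])
  have suN: "csubspace ?N" by (rule csub_ker[OF bP])
  have inter: "?R \<inter> ?N = {0}"
  proof
    show "?R \<inter> ?N \<subseteq> {0}"
    proof
      fix y assume "y \<in> ?R \<inter> ?N"
      then obtain z where z: "y = P z" "P (P z) = 0" by auto
      then show "y \<in> {0}" using ker2 by simp
    qed
    show "{0} \<subseteq> ?R \<inter> ?N" using csub_0[OF suR] csub_0[OF suN] by auto
  qed
  have decomp: "\<exists>z. P z \<in> ?R \<and> y - P z \<in> ?N" for y
  proof -
    obtain z where z: "P y = P (P z)" using ran2 by blast
    have "P (y - P z) = 0" using z by (simp add: bcl_sub[OF bP])
    then show ?thesis by blast
  qed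
  have sum: "{m + n |m n. m \<in> ?R \<and> n \<in> ?N} = UNIV"
  proof (intro set_eqI iffI)
    fix y :: 'a
    obtain z where "P z \<in> ?R" "y - P z \<in> ?N" using decomp by blast
    then show "y \<in> {m + n |m n. m \<in> ?R \<and> n \<in> ?N}" by (intro CollectI exI[of _ "P z"] exI[of _ "y - P z"]) auto
  qed simp
  have compl: "complemented ?R" unfolding complemented_def using suR clR suN clN inter sum by blast
  have finN: "\<exists>B. finite B \<and> ?N \<subseteq> cspan B"
    by (rule fin_dim_fixed[OF clN suN kP]) simp
  have infR: "infinite_dim ?R"
    unfolding infinite_dim_def
  proof
    assume "\<exists>B. finite B \<and> ?R \<subseteq> cspan B"
    then obtain B1 where B1: "finite B1" "?R \<subseteq> cspan B1" by blast
    obtain B2 where B2: "finite B2" "?N \<subseteq> cspan B2" using finN by blast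
    have "UNIV \<subseteq> cspan (B1 \<union> B2)"
    proof
      fix y :: 'a
      obtain z where z: "P z \<in> ?R" "y - P z \<in> ?N" using decomp by blast
      have "P z \<in> cspan (B1 \<union> B2)" using z(1) B1(2) cspan_mono[of B1 "B1 \<union> B2"] by blast
      moreover have "y - P z \<in> cspan (B1 \<union> B2)" using z(2) B2(2) cspan_mono[of B2 "B1 \<union> B2"] by blast
      ultimately have "P z + (y - P z) \<in> cspan (B1 \<union> B2)" by (rule csub_add[OF cspan_sub])
      then show "y \<in> cspan (B1 \<union> B2)" by simp
    qed
    then show False using inf B1(1) B2(1) unfolding infinite_dim_def by blast
  qed
  have inj: "\<forall>y\<in>?R. y - C y = 0 \<longrightarrow> y = 0"
  proof (intro ballI impI)
    fix y assume yR: "y \<in> ?R" and "y - C y = 0"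
    then have "A y = 0" by (simp add: A_def)
    then have "P y = 0" unfolding P_def s_def
      by (simp only: fp_Suc_right) (rule bcl_zero[OF bAp])
    then have "y \<in> ?R \<inter> ?N" using yR by simp
    then show "y = 0" using inter by blast
  qed
  show ?thesis using compl infR inj by blast
qed

theorem corollary5p4:
  fixes T :: "'x::complex_banach \<Rightarrow> 'x"
    and S :: "'y::complex_banach \<Rightarrow> 'y"
    and E :: "'y \<times> 'y2::complex_banach \<Rightarrow> 'x \<times> 'x2::complex_banach"
    and F :: "'x \<times> 'x2 \<Rightarrow> 'y \<times> 'y2"
  assumes "prime_space TYPE('y)"
    and "bounded_clinear T"
    and "compact_op S"
    and "equiv_after_ext_via T S E F"
  shows "\<exists>M :: 'x set. csubspace M \<and> closed M \<and> (\<exists>f :: 'y \<Rightarrow> 'x. top_iso_onto f M)"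
proof -
  have invE: "invertible_op E" and invF: "invertible_op F"
    and eqn: "(\<lambda>(x, x'). (T x, x')) = E \<circ> (\<lambda>(y, y'). (S y, y')) \<circ> F"
    using assms(4) unfolding equiv_after_ext_via_def by auto
  have bE: "bounded_clinear E" using invE unfolding invertible_op_def by blast
  have bF: "bounded_clinear F" using invF unfolding invertible_op_def by blast
  obtain G where bG: "bounded_clinear G" and GF: "G \<circ> F = id" and FG0: "F \<circ> G = id"
    using invF unfolding invertible_op_def by blast
  have FG: "F (G w) = w" for w using fun_cong[OF FG0, of w] by simp
  have bS: "bounded_clinear S" using assms(3) unfolding compact_op_def by blast
  have kS: "kop S" by (rule compact_op_kop[OF assms(3)])
  have infY: "infinite_dim (UNIV :: 'y set)" using assms(1) unfolding prime_space_def by blast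
  define J where "J y = fst (G (y, 0::'y2))" for y
  define K1 where "K1 y = snd (G (y, 0::'y2))" for y
  define L where "L z = snd (E (z, 0::'y2))" for z
  define Gx where "Gx x = fst (F (x, 0::'x2))" for x
  define Px where "Px x' = fst (F (0::'x, x'))" for x'
  have bJ: "bounded_clinear J"
  proof -
    have "bounded_clinear (\<lambda>y. G (y, 0::'y2))" by (rule bcl_comp[OF bG bcl_inl])
    then have "bounded_clinear (\<lambda>y. fst (G (y, 0::'y2)))" by (rule bcl_comp[OF bcl_fst])
    then show ?thesis unfolding J_def[abs_def] .
  qed
  have bK1: "bounded_clinear K1"
  proof -
    have "bounded_clinear (\<lambda>y. G (y, 0::'y2))" by (rule bcl_comp[OF bG bcl_inl])
    then have "bounded_clinear (\<lambda>y. snd (G (y, 0::'y2)))" by (rule bcl_comp[OF bcl_snd])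
    then show ?thesis unfolding K1_def[abs_def] .
  qed
  have bL: "bounded_clinear L"
  proof -
    have "bounded_clinear (\<lambda>y. E (y, 0::'y2))" by (rule bcl_comp[OF bE bcl_inl])
    then have "bounded_clinear (\<lambda>y. snd (E (y, 0::'y2)))" by (rule bcl_comp[OF bcl_snd])
    then show ?thesis unfolding L_def[abs_def] .
  qed
  have bGx: "bounded_clinear Gx"
  proof -
    have "bounded_clinear (\<lambda>y. F (y, 0::'x2))" by (rule bcl_comp[OF bF bcl_inl])
    then have "bounded_clinear (\<lambda>y. fst (F (y, 0::'x2)))" by (rule bcl_comp[OF bcl_fst])
    then show ?thesis unfolding Gx_def[abs_def] .
  qed
  have bPx: "bounded_clinear Px"
  proof -
    have "bounded_clinear (\<lambda>y. F (0::'x, y))" by (rule bcl_comp[OF bF bcl_inr])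
    then have "bounded_clinear (\<lambda>y. fst (F (0::'x, y)))" by (rule bcl_comp[OF bcl_fst])
    then show ?thesis unfolding Px_def[abs_def] .
  qed
  have GJ: "G (y, 0) = (J y, K1 y)" for y by (simp add: J_def K1_def)
  have K1L: "K1 y = L (S y)" for y
  proof -
    have "(\<lambda>(x, x'). (T x, x')) (G (y, 0)) = (E \<circ> (\<lambda>(y, y'). (S y, y')) \<circ> F) (G (y, 0))"
      by (simp only: eqn)
    also have "\<dots> = E (S y, 0)" by (simp add: FG)
    finally have "(T (J y), K1 y) = E (S y, 0)" by (simp add: GJ)
    then have "K1 y = snd (E (S y, 0))" by (metis snd_conv)
    then show ?thesis by (simp add: L_def)
  qed
  define Cc where "Cc y = Px (L (S y))" for y
  have idy: "y - Cc y = Gx (J y)" for y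
  proof -
    have "(y, 0) = F (G (y, 0))" by (simp add: FG)
    also have "\<dots> = F ((J y, 0) + (0, K1 y))" by (simp add: GJ)
    also have "\<dots> = F (J y, 0) + F (0, K1 y)" by (rule bcl_add[OF bF])
    finally have "y = Gx (J y) + Px (K1 y)" unfolding Gx_def Px_def by (metis fst_add fst_conv)
    then have "y - Px (K1 y) = Gx (J y)" by (metis add_diff_cancel)
    then show ?thesis by (simp add: Cc_def K1L)
  qed
  have kLS: "kop (\<lambda>y. L (S y))" by (rule kop_comp_left[OF kS bcl_linear[OF bL]])
  have kC: "kop Cc"
  proof -
    have "kop (\<lambda>y. Px (L (S y)))" by (rule kop_comp_left[OF kLS bcl_linear[OF bPx]])
    then show ?thesis unfolding Cc_def[abs_def] .
  qed
  have bC: "bounded_clinear Cc"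
  proof -
    have "bounded_clinear (\<lambda>y. L (S y))" by (rule bcl_comp[OF bL bS])
    then have "bounded_clinear (\<lambda>y. Px (L (S y)))" by (rule bcl_comp[OF bPx])
    then show ?thesis unfolding Cc_def[abs_def] .
  qed
  obtain R where compR: "complemented R" and infR: "infinite_dim R"
    and injC: "\<And>y. y \<in> R \<Longrightarrow> y - Cc y = 0 \<Longrightarrow> y = 0"
    using riesz_decomp[OF kC bC infY] by blast
  have suR: "csubspace R" and clR: "closed R" using compR unfolding complemented_def by auto
  have injJ0: "y = 0" if "y \<in> R" "J y = 0" for y
  proof (rule injC[OF that(1)])
    show "y - Cc y = 0" unfolding idy that(2) by (rule bcl_zero[OF bGx])
  qed
  have kK1: "kop K1" by (rule kop_cong[OF kLS]) (simp add: K1L)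
  have "\<exists>c>0. \<forall>y\<in>R. norm y \<le> c * norm (J y)"
  proof (rule ccontr)
    assume nb: "\<not> ?thesis"
    have "\<exists>y. y \<in> R \<and> norm y > real (Suc n) * norm (J y)" for n
    proof -
      have "\<not> (\<forall>y\<in>R. norm y \<le> real (Suc n) * norm (J y))" using nb by (metis of_nat_0_less_iff zero_less_Suc)
      then show ?thesis by (auto simp: not_le)
    qed
    then obtain y where y: "\<And>n. y n \<in> R" "\<And>n. norm (y n) > real (Suc n) * norm (J (y n))" by metis
    have ny: "norm (y n) > 0" for n
    proof -
      have "0 \<le> real (Suc n) * norm (J (y n))" by simp
      then show ?thesis using y(2)[of n] by linarith
    qed
    define u where "u n = (1 / norm (y n)) *\<^sub>R y n" for n
    have uR: "u n \<in> R" for n unfolding u_def by (rule csub_rscale[OF suR y(1)])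
    have nu: "norm (u n) = 1" for n using ny[of n] by (simp add: u_def)
    have Ju: "norm (J (u n)) < 1 / real (Suc n)" for n
    proof -
      have "J (u n) = (1 / norm (y n)) *\<^sub>R J (y n)" unfolding u_def by (rule bcl_rscale[OF bJ])
      then have e: "norm (J (u n)) = norm (J (y n)) / norm (y n)" using ny[of n] by simp
      show ?thesis unfolding e using y(2)[of n] ny[of n]
        by (simp add: divide_less_eq field_simps del: of_nat_Suc)
    qed
    have Ju0: "(\<lambda>n. J (u n)) \<longlonglongrightarrow> 0" by (rule LIMSEQ_norm_0) (rule Ju)
    have "bounded (range u)" unfolding bounded_iff using nu by auto
    then obtain r where r: "strict_mono r" "convergent (\<lambda>n. K1 (u (r n)))" using kopD[OF kK1] by blast
    then obtain k where k: "(\<lambda>n. K1 (u (r n))) \<longlonglongrightarrow> k" unfolding convergent_def by blast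
    have Jr: "(\<lambda>n. J (u (r n))) \<longlonglongrightarrow> 0" using LIMSEQ_subseq_LIMSEQ[OF Ju0 r(1)] by (simp add: o_def)
    have "(\<lambda>n. G (u (r n), 0)) \<longlonglongrightarrow> (0, k)" unfolding GJ by (rule tendsto_Pair[OF Jr k])
    then have "(\<lambda>n. F (G (u (r n), 0))) \<longlonglongrightarrow> F (0, k)" by (rule bcl_tendsto[OF bF])
    then have "(\<lambda>n. (u (r n), 0::'y2)) \<longlonglongrightarrow> F (0, k)" by (simp add: FG)
    then have "(\<lambda>n. fst (u (r n), 0::'y2)) \<longlonglongrightarrow> fst (F (0, k))" by (rule tendsto_fst)
    then have ur: "(\<lambda>n. u (r n)) \<longlonglongrightarrow> fst (F (0, k))" by simp
    define w where "w = fst (F (0, k))"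
    have wR: "w \<in> R" unfolding w_def by (rule closed_sequentially[OF clR uR ur])
    have "(\<lambda>n. norm (u (r n))) \<longlonglongrightarrow> norm w" using ur unfolding w_def by (rule tendsto_norm)
    then have "(\<lambda>n. 1::real) \<longlonglongrightarrow> norm w" by (simp add: nu)
    then have nw: "norm w = 1" using LIMSEQ_unique tendsto_const by blast
    have "(\<lambda>n. J (u (r n))) \<longlonglongrightarrow> J w" using ur unfolding w_def by (rule bcl_tendsto[OF bJ])
    then have "J w = 0" using Jr LIMSEQ_unique by blast
    then have "w = 0" by (rule injJ0[OF wR])
    then show False using nw by simp
  qed
  then obtain c where c: "c > 0" "\<And>y. y \<in> R \<Longrightarrow> norm y \<le> c * norm (J y)" by blast
  obtain \<phi> :: "'y \<Rightarrow> 'y" where phi: "top_iso_onto \<phi> R"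
    using assms(1) compR infR unfolding prime_space_def by blast
  have bphi: "bounded_clinear \<phi>" and bijphi: "bij_betw \<phi> UNIV R"
    and cphi: "continuous_on R (inv_into UNIV \<phi>)" using phi unfolding top_iso_onto_def by auto
  have injJ: "inj_on J R"
  proof (rule inj_onI)
    fix a b assume ab: "a \<in> R" "b \<in> R" "J a = J b"
    have "J (a - b) = 0" using ab(3) by (simp add: bcl_sub[OF bJ])
    then have "a - b = 0" by (rule injJ0[OF csub_diff[OF suR ab(1) ab(2)]])
    then show "a = b" by simp
  qed
  let ?M = "J ` R"
  have suM: "csubspace ?M" by (rule csub_image[OF bJ suR])
  have clM: "closed ?M"
    unfolding closed_sequential_limits
  proof (intro allI impI, elim conjE)
    fix x l assume xM: "\<forall>n. x n \<in> ?M" and xl: "x \<longlonglongrightarrow> l"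
    have "\<forall>n. \<exists>y. y \<in> R \<and> x n = J y" using xM by blast
    then obtain y where y: "\<And>n. y n \<in> R" "\<And>n. x n = J (y n)" by metis
    have "Cauchy y"
    proof (rule metric_CauchyI)
      fix e :: real assume e: "e > 0"
      have "Cauchy x" using xl by (rule LIMSEQ_imp_Cauchy)
      then obtain N where N: "\<forall>m\<ge>N. \<forall>n\<ge>N. dist (x m) (x n) < e / c"
        using metric_CauchyD[of x "e / c"] e c(1) by auto
      show "\<exists>N. \<forall>m\<ge>N. \<forall>n\<ge>N. dist (y m) (y n) < e"
      proof (intro exI allI impI)
        fix m n assume mn: "m \<ge> N" "n \<ge> N"
        have "norm (y m - y n) \<le> c * norm (J (y m - y n))"
          by (rule c(2)[OF csub_diff[OF suR y(1) y(1)]])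
        also have "J (y m - y n) = x m - x n" by (simp add: bcl_sub[OF bJ] y(2))
        also have "c * norm (x m - x n) < c * (e / c)"
        proof -
          have "norm (x m - x n) < e / c" using N mn by (simp add: dist_norm)
          then show ?thesis using c(1) by (rule mult_strict_left_mono)
        qed
        also have "c * (e / c) = e" using c(1) by simp
        finally show "dist (y m) (y n) < e" by (simp add: dist_norm)
      qed
    qed
    then obtain w where yw: "y \<longlonglongrightarrow> w" using Cauchy_convergent_iff convergent_def by blast
    have wR: "w \<in> R" by (rule closed_sequentially[OF clR y(1) yw])
    have "(\<lambda>n. J (y n)) \<longlonglongrightarrow> J w" by (rule bcl_tendsto[OF bJ yw])
    moreover have "x = (\<lambda>n. J (y n))" by (rule ext) (rule y(2))
    ultimately have "x \<longlonglongrightarrow> J w" by simp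
    then have "l = J w" using xl LIMSEQ_unique by blast
    then show "l \<in> ?M" using wR by blast
  qed
  define f where "f = J \<circ> \<phi>"
  have bf: "bounded_clinear f"
  proof -
    have "bounded_clinear (\<lambda>z. J (\<phi> z))" by (rule bcl_comp[OF bJ bphi])
    then show ?thesis unfolding f_def o_def .
  qed
  have bijf: "bij_betw f UNIV ?M" unfolding f_def
    by (rule bij_betw_trans[OF bijphi inj_on_imp_bij_betw[OF injJ]])
  have injf: "inj f" using bijf by (simp add: bij_betw_def)
  have injphi: "inj \<phi>" using bijphi by (simp add: bij_betw_def)
  have imphi: "\<phi> ` UNIV = R" using bijphi by (simp add: bij_betw_def)
  define Jinv where "Jinv = inv_into R J"
  have JinvJ: "Jinv (J a) = a" if "a \<in> R" for a unfolding Jinv_def by (rule inv_into_f_f[OF injJ that])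
  have lipJ: "c-lipschitz_on ?M Jinv"
  proof (rule lipschitz_onI)
    fix a b assume "a \<in> ?M" "b \<in> ?M"
    then obtain a' b' where ab: "a' \<in> R" "b' \<in> R" "a = J a'" "b = J b'" by blast
    have "norm (a' - b') \<le> c * norm (J (a' - b'))" by (rule c(2)[OF csub_diff[OF suR ab(1) ab(2)]])
    then show "dist (Jinv a) (Jinv b) \<le> c * dist a b"
      using ab by (simp add: JinvJ dist_norm bcl_sub[OF bJ])
  next
    show "0 \<le> c" using c(1) by simp
  qed
  have cJinv: "continuous_on ?M Jinv" by (rule lipschitz_on_continuous_on[OF lipJ])
  have JinvM: "Jinv ` ?M \<subseteq> R" using JinvJ by auto
  have ccomp: "continuous_on ?M (\<lambda>x. inv_into UNIV \<phi> (Jinv x))"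
    by (rule continuous_on_compose2[OF cphi cJinv JinvM])
  have eqinv: "inv_into UNIV f x = inv_into UNIV \<phi> (Jinv x)" if xM: "x \<in> ?M" for x
  proof -
    obtain a where a: "a \<in> R" "x = J a" using xM by blast
    obtain z where z: "a = \<phi> z" using a(1) imphi by blast
    have "x = f z" using a z by (simp add: f_def)
    then have "inv_into UNIV f x = z" using inv_into_f_f[OF injf] by simp
    moreover have "inv_into UNIV \<phi> (Jinv x) = z"
      using a z JinvJ inv_into_f_f[OF injphi] by simp
    ultimately show ?thesis by simp
  qed
  have cinv: "continuous_on ?M (inv_into UNIV f)"
  proof -
    have "continuous_on ?M (inv_into UNIV f) \<longleftrightarrow> continuous_on ?M (\<lambda>x. inv_into UNIV \<phi> (Jinv x))"
      by (rule continuous_on_cong) (simp_all only: eqinv)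
    then show ?thesis using ccomp by simp
  qed
  have "top_iso_onto f ?M" unfolding top_iso_onto_def using bf bijf cinv by blast
  then show ?thesis using suM clM by blast
qed

end
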